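(* Define the Genocchi numbers $g_n$ ($n\ge1$) by $\sum_{n\ge 1}g_n t^n = \sum_{m\ge 1}\frac{m!(m-1)!\,t^{m}}{\prod_{k=1}^m (1+k^2 t)}$. Then for all $n\ge 1$, $g_n$ equals the number of cycles on $[2n]$ with only even-odd drops, i.e. cycles all of whose drops $(a,b)$ have $a$ even and $b$ odd.
   Context: For $N\ge1$, a cycle on $[N]=\{1,\dots,N\}$ is an equivalence class of permutations $\pi=\pi_1\cdots\pi_N$ of $[N]$ (one-line notation) under cyclic rotation of the entries; indices are read modulo $N$ (so $\pi_{N+1}=\pi_1$). A drop of a cycle is a consecutive pair $(\pi_i,\pi_{i+1})$, $1\le i\le N$, with $\pi_i>\pi_{i+1}$ (independent of the rotation chosen). A drop $(a,b)$ is even-odd if $a$ is even and $b$ is odd. *)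

theory Defs
  imports "HOL-Computational_Algebra.Formal_Power_Series"
begin

definition genocchi_term :: "nat \<Rightarrow> rat fps" where
  "genocchi_term m =
     fps_const (of_nat (fact m * fact (m - 1))) * fps_X ^ m *
     inverse (\<Prod>k=1..m. (1 + fps_const (of_nat (k^2)) * fps_X))"

(* Coefficient of t^n in  sum_{m>=1} genocchi_term m.  Since genocchi_term m has order >= m,
   only the summands with m <= n contribute to the coefficient of t^n. *)
definition genocchi :: "nat \<Rightarrow> rat" where
  "genocchi n = (\<Sum>m=1..n. fps_nth (genocchi_term m) n)"

definition perms_list :: "nat \<Rightarrow> nat list set" where
  "perms_list N = {xs. distinct xs \<and> set xs = {1..N}}"

definition cyc_rel :: "nat \<Rightarrow> (nat list \<times> nat list) set" where
  "cyc_rel N = {(xs, ys). xs \<in> perms_list N \<and> ys \<in> perms_list N \<and> (\<exists>k. ys = rotate k xs)}"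

definition cycles :: "nat \<Rightarrow> nat list set set" where
  "cycles N = perms_list N // cyc_rel N"

definition is_drop :: "nat list \<Rightarrow> nat \<Rightarrow> nat \<Rightarrow> bool" where
  "is_drop xs a b \<longleftrightarrow> (\<exists>i < length xs. a = xs ! i \<and> b = xs ! ((i + 1) mod length xs) \<and> a > b)"

definition only_even_odd_drops :: "nat list \<Rightarrow> bool" where
  "only_even_odd_drops xs \<longleftrightarrow> (\<forall>a b. is_drop xs a b \<longrightarrow> even a \<and> odd b)"

end

theory Submission
  imports Defs "HOL-Computational_Algebra.Polynomial"
begin


fun pairs :: "'a list \<Rightarrow> ('a \<times> 'a) list" where
  "pairs (a # b # l) = (a, b) # pairs (b # l)"
| "pairs _ = []"

lemma pairs_zip: "pairs l = zip l (tl l)"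
  by (induction l rule: pairs.induct) auto

lemma pairs_append:
  "l1 \<noteq> [] \<Longrightarrow> l2 \<noteq> [] \<Longrightarrow> pairs (l1 @ l2) = pairs l1 @ (last l1, hd l2) # pairs l2"
proof (induction l1)
  case Nil then show ?case by simp
next
  case (Cons a l1)
  show ?case
  proof (cases l1)
    case Nil then show ?thesis using Cons by (cases l2) auto
  next
    case (Cons b l1') then show ?thesis using Cons.IH Cons.prems by auto
  qed
qed

definition edges :: "nat list \<Rightarrow> (nat \<times> nat) list" where
  "edges xs = pairs (xs @ [hd xs])"

lemma length_edges: "length (edges xs) = length xs"
  by (simp add: edges_def pairs_zip)

lemma edges_nth:
  assumes "i < length xs"
  shows "edges xs ! i = (xs ! i, xs ! (Suc i mod length xs))"
proof -
  have ne: "xs \<noteq> []" using assms by auto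
  have "edges xs = zip (xs @ [hd xs]) (rotate1 xs)"
    using ne by (simp add: edges_def pairs_zip rotate1_hd_tl)
  then show ?thesis using assms by (simp add: nth_append nth_rotate1)
qed

lemma map_snd_edges: "map snd (edges xs) = rotate1 xs"
  by (rule nth_equalityI) (auto simp: length_edges edges_nth nth_rotate1)

lemma edges_ins:
  assumes "as \<noteq> []"
  shows "edges (as @ M # bs) = pairs as @ (last as, M) # (M, hd (bs @ [hd as])) # pairs (bs @ [hd as])"
    and "edges (as @ bs) = pairs as @ (last as, hd (bs @ [hd as])) # pairs (bs @ [hd as])"
proof -
  obtain y r where yr: "bs @ [hd as] = y # r" by (cases bs) auto
  show "edges (as @ M # bs) = pairs as @ (last as, M) # (M, hd (bs @ [hd as])) # pairs (bs @ [hd as])"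
    using assms pairs_append[of as "M # bs @ [hd as]"] yr by (simp add: edges_def)
  show "edges (as @ bs) = pairs as @ (last as, hd (bs @ [hd as])) # pairs (bs @ [hd as])"
    using assms pairs_append[of as "bs @ [hd as]"] yr by (simp add: edges_def)
qed

lemma length_pairs: "length (pairs l) = length l - 1"
  by (simp add: pairs_zip)

definition bo :: "nat list \<Rightarrow> bool" where
  "bo xs \<longleftrightarrow> (\<forall>e\<in>set (edges xs). snd e < fst e \<longrightarrow> odd (snd e))"

definition otp :: "nat \<times> nat \<Rightarrow> bool" where
  "otp e \<longleftrightarrow> snd e < fst e \<and> odd (fst e)"

definition ot :: "nat list \<Rightarrow> nat" where
  "ot xs = length (filter otp (edges xs))"

lemma edge_ins:
  assumes "as \<noteq> []" "\<forall>x\<in>set (as @ bs). x < M"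
  shows "bo (as @ M # bs) \<longleftrightarrow> bo (as @ bs) \<and> odd (hd (bs @ [hd as]))"
    and "ot (as @ M # bs) + (if otp (last as, hd (bs @ [hd as])) then 1 else 0)
         = ot (as @ bs) + (if odd M then 1 else 0)"
proof -
  define y where "y = hd (bs @ [hd as])"
  have yin: "y \<in> set (as @ bs)" using assms(1) unfolding y_def by (cases bs) auto
  have lin: "last as \<in> set (as @ bs)" using assms(1) by auto
  have yM: "y < M" using yin assms(2) by auto
  have lM: "last as < M" using lin assms(2) by auto
  note E = edges_ins(1)[OF assms(1), of M bs, folded y_def] edges_ins(2)[OF assms(1), of bs, folded y_def]
  show "bo (as @ M # bs) \<longleftrightarrow> bo (as @ bs) \<and> odd (hd (bs @ [hd as]))"
    unfolding bo_def E y_def[symmetric] using yM lM by auto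
  show "ot (as @ M # bs) + (if otp (last as, hd (bs @ [hd as])) then 1 else 0)
         = ot (as @ bs) + (if odd M then 1 else 0)"
    unfolding ot_def E y_def[symmetric] using yM lM by (auto simp: otp_def)
qed

definition L :: "nat \<Rightarrow> nat list set" where
  "L N = {xs. distinct xs \<and> set xs = {1..N} \<and> hd xs = 1}"

definition B :: "nat \<Rightarrow> nat list set" where
  "B N = {xs \<in> L N. bo xs}"

definition pos :: "nat \<Rightarrow> nat list \<Rightarrow> nat set" where
  "pos N xs = {i. i < N \<and> odd (snd (edges xs ! i))}"

definition ins :: "nat \<Rightarrow> nat list \<Rightarrow> nat \<Rightarrow> nat list" where
  "ins N xs i = take (Suc i) xs @ Suc N # drop (Suc i) xs"

definition PP :: "nat \<Rightarrow> rat poly" where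
  "PP N = (\<Sum>xs\<in>B N. monom 1 (ot xs))"

lemma L_length: "xs \<in> L N \<Longrightarrow> length xs = N"
  unfolding L_def using distinct_card by fastforce

lemma finite_L: "finite (L N)"
proof (rule finite_subset)
  show "L N \<subseteq> {xs. set xs \<subseteq> {1..N} \<and> length xs \<le> N}"
    using L_length by (auto simp: L_def)
  show "finite {xs. set xs \<subseteq> {1..N} \<and> length xs \<le> N}"
    by (rule finite_lists_length_le) simp
qed

lemma finite_B: "finite (B N)"
  using finite_L unfolding B_def by auto

lemma ins_props:
  assumes N: "N \<ge> 1" and xs: "xs \<in> B N" and i: "i \<in> pos N xs"
  shows "ins N xs i \<in> B (Suc N)"
    and "ot (ins N xs i) + (if otp (edges xs ! i) then 1 else 0) = ot xs + (if odd (Suc N) then 1 else 0)"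
proof -
  define as where "as = take (Suc i) xs"
  define bs where "bs = drop (Suc i) xs"
  have len: "length xs = N" using xs L_length unfolding B_def by auto
  have iN: "i < N" using i unfolding pos_def by auto
  have xsab: "xs = as @ bs" unfolding as_def bs_def by simp
  have asne: "as \<noteq> []" using iN len unfolding as_def by (cases xs) auto
  have las: "length as = Suc i" using iN len unfolding as_def by simp
  have hdas: "hd as = hd xs" using asne xsab by simp
  have lt: "\<forall>x\<in>set (as @ bs). x < Suc N" using xs xsab unfolding B_def L_def by auto
  have ei: "edges xs ! i = (last as, hd (bs @ [hd as]))"
    using edges_ins(2)[OF asne, of bs] xsab las by (simp add: nth_append length_pairs)
  have oy: "odd (hd (bs @ [hd as]))" using i ei unfolding pos_def by simp
  have insd: "ins N xs i = as @ Suc N # bs" unfolding ins_def as_def bs_def by simp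
  have boxs: "bo (as @ bs)" using xs xsab unfolding B_def by simp
  have "Suc N \<notin> set as" "Suc N \<notin> set bs" using lt by auto
  then have "distinct (as @ Suc N # bs)" using xs xsab unfolding B_def L_def by auto
  moreover have "set (as @ Suc N # bs) = {1..Suc N}" using xs xsab unfolding B_def L_def by auto
  moreover have "hd (as @ Suc N # bs) = 1" using xs xsab asne unfolding B_def L_def by simp
  moreover have "bo (as @ Suc N # bs)" using edge_ins(1)[OF asne lt] boxs oy by simp
  ultimately show "ins N xs i \<in> B (Suc N)" unfolding insd B_def L_def by simp
  show "ot (ins N xs i) + (if otp (edges xs ! i) then 1 else 0) = ot xs + (if odd (Suc N) then 1 else 0)"
    using edge_ins(2)[OF asne lt] unfolding insd ei by (simp add: xsab)
qed

lemma ins_inj: "inj_on (\<lambda>(xs, i). ins N xs i) (Sigma (B N) (pos N))"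
proof (rule inj_onI, clarify)
  fix xs i xs' i'
  assume a: "xs \<in> B N" "i \<in> pos N xs" "xs' \<in> B N" "i' \<in> pos N xs'" "ins N xs i = ins N xs' i'"
  have len: "length xs = N" "length xs' = N" using a L_length unfolding B_def by auto
  have n1: "Suc N \<notin> set (take (Suc i) xs)" "Suc N \<notin> set (drop (Suc i) xs)"
    using a unfolding B_def L_def by (auto dest: in_set_takeD in_set_dropD)
  have "take (Suc i) xs = take (Suc i') xs' \<and> drop (Suc i) xs = drop (Suc i') xs'"
    using a(5) append_Cons_eq_iff[OF n1] unfolding ins_def by simp
  moreover have "i < N" "i' < N" using a unfolding pos_def by auto
  ultimately show "xs = xs' \<and> i = i'"
    by (metis append_take_drop_id len length_take min.absorb2 Suc_leI nat.inject)
qed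

lemma ins_surj:
  assumes N: "N \<ge> 1" and ys: "ys \<in> B (Suc N)"
  shows "ys \<in> (\<lambda>(xs, i). ins N xs i) ` Sigma (B N) (pos N)"
proof -
  have "Suc N \<in> set ys" using ys unfolding B_def L_def by auto
  then obtain as bs where ysd: "ys = as @ Suc N # bs" by (meson split_list)
  have asne: "as \<noteq> []" using ys ysd N unfolding B_def L_def by auto
  have dys: "distinct ys" "set ys = {1..Suc N}" "hd ys = 1" "bo ys" using ys unfolding B_def L_def by auto
  define xs where "xs = as @ bs"
  have nin: "Suc N \<notin> set as" "Suc N \<notin> set bs" using dys ysd by auto
  have setxs: "set xs = {1..N}"
  proof -
    have "set xs = set ys - {Suc N}" using nin ysd dys(1) unfolding xs_def by auto
    then show ?thesis using dys(2) by auto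
  qed
  have lt: "\<forall>x\<in>set (as @ bs). x < Suc N" using setxs unfolding xs_def by auto
  have bb: "bo xs \<and> odd (hd (bs @ [hd as]))" using edge_ins(1)[OF asne lt] dys(4) ysd xs_def by simp
  have xsL: "xs \<in> B N" using dys ysd bb setxs asne unfolding B_def L_def xs_def by auto
  define i where "i = length as - 1"
  have las: "length as = Suc i" using asne unfolding i_def by (cases as) auto
  have lenxs: "length xs = N" using xsL L_length unfolding B_def by auto
  have iN: "i < N" using las lenxs unfolding xs_def by simp
  have ei: "edges xs ! i = (last as, hd (bs @ [hd as]))"
    using edges_ins(2)[OF asne, of bs] las unfolding xs_def by (simp add: nth_append length_pairs)
  have ipos: "i \<in> pos N xs" using iN ei bb unfolding pos_def by simp
  have "ins N xs i = ys" unfolding ins_def xs_def ysd using las by simp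
  then show ?thesis using xsL ipos by force
qed



definition oc :: "nat \<Rightarrow> nat" where
  "oc N = card ({x. odd x} \<inter> {1..N})"

lemma card_pos:
  assumes "xs \<in> L N" shows "card (pos N xs) = oc N"
proof -
  have len: "length xs = N" using assms L_length by auto
  have s1: "pos N xs = {i. i < length (rotate1 xs) \<and> odd (rotate1 xs ! i)}"
  proof -
    have "snd (edges xs ! i) = rotate1 xs ! i" if "i < N" for i
      using that len nth_map[of i "edges xs" snd] by (simp add: length_edges map_snd_edges)
    then show ?thesis unfolding pos_def using len by auto
  qed
  have "card (pos N xs) = length (filter odd (rotate1 xs))"
    unfolding s1 by (rule length_filter_conv_card[symmetric])
  also have "\<dots> = card ({x. odd x} \<inter> set xs)"
    using assms unfolding L_def by (subst distinct_length_filter) auto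
  also have "\<dots> = oc N"
    using assms unfolding L_def oc_def by (simp only: mem_Collect_eq)
  finally show ?thesis .
qed


lemma card_bad:
  assumes "xs \<in> B N" shows "card {i \<in> pos N xs. otp (edges xs ! i)} = ot xs"
proof -
  have len: "length xs = N" using assms L_length unfolding B_def by auto
  have "{i \<in> pos N xs. otp (edges xs ! i)} = {i. i < length (edges xs) \<and> otp (edges xs ! i)}"
  proof -
    have "odd (snd (edges xs ! i))" if "i < N" "otp (edges xs ! i)" for i
    proof -
      have "edges xs ! i \<in> set (edges xs)" "snd (edges xs ! i) < fst (edges xs ! i)"
        using len that by (auto simp: length_edges otp_def)
      then show "odd (snd (edges xs ! i))" using assms unfolding B_def bo_def by auto
    qed
    then show ?thesis by (auto simp: pos_def length_edges len)
  qed
  then show ?thesis by (simp add: ot_def length_filter_conv_card)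
qed

lemma ot_le: assumes "xs \<in> B N" shows "ot xs \<le> oc N"
proof -
  have "finite (pos N xs)" by (simp add: pos_def)
  then have "card {i \<in> pos N xs. otp (edges xs ! i)} \<le> card (pos N xs)" by (intro card_mono) auto
  then show ?thesis using card_bad[OF assms] card_pos[of xs N] assms unfolding B_def by simp
qed

lemma pderiv_sum: "pderiv (sum f A) = (\<Sum>x\<in>A. pderiv (f x))"
  using higher_pderiv_sum[of 1 f A] by simp

lemma PP_rec:
  assumes N: "N \<ge> 1"
  shows "PP (Suc N) = (\<Sum>xs\<in>B N. (if odd (Suc N) then
            monom (of_nat (ot xs)) (ot xs) + monom (of_nat (oc N - ot xs)) (Suc (ot xs))
          else monom (of_nat (ot xs)) (ot xs - 1) + monom (of_nat (oc N - ot xs)) (ot xs)))"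
proof -
  define c where "c = (if odd (Suc N) then 1 else 0 :: nat)"
  have fin: "finite (Sigma (B N) (pos N))" using finite_B by (auto simp: pos_def)
  have img: "(\<lambda>(xs, i). ins N xs i) ` Sigma (B N) (pos N) = B (Suc N)"
    using ins_props(1)[OF N] ins_surj[OF N] by auto
  have "PP (Suc N) = (\<Sum>(xs,i)\<in>Sigma (B N) (pos N). monom 1 (ot (ins N xs i)))"
    unfolding PP_def by (rule sum.reindex_cong[OF ins_inj img[symmetric]]) auto
  also have "\<dots> = (\<Sum>xs\<in>B N. \<Sum>i\<in>pos N xs. monom 1 (ot (ins N xs i)))"
    by (rule sum.Sigma[symmetric]) (auto simp: finite_B pos_def)
  also have "\<dots> = (\<Sum>xs\<in>B N. (if odd (Suc N) then
            monom (of_nat (ot xs)) (ot xs) + monom (of_nat (oc N - ot xs)) (Suc (ot xs))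
          else monom (of_nat (ot xs)) (ot xs - 1) + monom (of_nat (oc N - ot xs)) (ot xs)))"
  proof (rule sum.cong[OF refl])
    fix xs assume xs: "xs \<in> B N"
    define bad where "bad = {i \<in> pos N xs. otp (edges xs ! i)}"
    define good where "good = {i \<in> pos N xs. \<not> otp (edges xs ! i)}"
    have finp: "finite (pos N xs)" by (auto simp: pos_def)
    have cb: "card bad = ot xs" using card_bad[OF xs] bad_def by simp
    have cg: "card good = oc N - ot xs"
    proof -
      have "good = pos N xs - bad" unfolding good_def bad_def by auto
      moreover have "bad \<subseteq> pos N xs" unfolding bad_def by auto
      ultimately have "card good = card (pos N xs) - card bad"
        using card_Diff_subset[of bad "pos N xs"] finp finite_subset by metis
      then show ?thesis using cb card_pos[of xs N] xs unfolding B_def by simp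
    qed
    have e: "ot (ins N xs i) = ot xs + c - (if otp (edges xs ! i) then 1 else 0)" if "i \<in> pos N xs" for i
      using ins_props(2)[OF N xs that] unfolding c_def by linarith
    have "(\<Sum>i\<in>pos N xs. monom (1::rat) (ot (ins N xs i)))
        = (\<Sum>i\<in>pos N xs. if otp (edges xs ! i) then monom 1 (ot xs + c - 1) else monom 1 (ot xs + c))"
      by (rule sum.cong[OF refl]) (simp only: e if_distrib diff_zero, simp)
    also have "\<dots> = (\<Sum>i\<in>bad. monom 1 (ot xs + c - 1)) + (\<Sum>i\<in>good. monom 1 (ot xs + c))"
      unfolding bad_def good_def by (rule sum.If_cases[OF finp, unfolded Int_def, simplified])
    also have "\<dots> = monom (of_nat (ot xs)) (ot xs + c - 1) + monom (of_nat (oc N - ot xs)) (ot xs + c)"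
      by (simp add: cb cg of_nat_monom mult_monom)
    finally show "(\<Sum>i\<in>pos N xs. monom (1::rat) (ot (ins N xs i))) = (if odd (Suc N) then
            monom (of_nat (ot xs)) (ot xs) + monom (of_nat (oc N - ot xs)) (Suc (ot xs))
          else monom (of_nat (ot xs)) (ot xs - 1) + monom (of_nat (oc N - ot xs)) (ot xs))"
      unfolding c_def by (cases "odd (Suc N)") simp_all
  qed
  finally show ?thesis .
qed


abbreviation XX :: "rat poly" where "XX \<equiv> [:0, 1:]"

lemma monom_X: "monom (1::rat) 1 = XX"
  by (simp add: monom_Suc)

lemma id_odd:
  assumes "j \<le> (k::nat)"
  shows "monom (of_nat j) j + monom (of_nat (k - j)) (Suc j) =
         smult (of_nat k) (XX * monom 1 j) + (XX - XX^2) * pderiv (monom (1::rat) j)"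
  using assms by (cases j) (auto simp: poly_eq_iff coeff_monom pderiv_monom coeff_pCons of_nat_diff
      algebra_simps power2_eq_square split: nat.split)

lemma id_even:
  assumes "j \<le> (k::nat)"
  shows "monom (of_nat j) (j - 1) + monom (of_nat (k - j)) j =
         smult (of_nat k) (monom 1 j) + (1 - XX) * pderiv (monom (1::rat) j)"
  using assms by (cases j) (auto simp: poly_eq_iff coeff_monom pderiv_monom coeff_pCons of_nat_diff
      algebra_simps split: nat.split)

lemma smult_sum_poly: "smult c (\<Sum>x\<in>A. f x) = (\<Sum>x\<in>A. smult c (f x))"
  by (induction A rule: infinite_finite_induct) (auto simp: smult_add_right)

lemma PP_odd:
  assumes "N \<ge> 1" "odd (Suc N)"
  shows "PP (Suc N) = smult (of_nat (oc N)) (XX * PP N) + (XX - XX^2) * pderiv (PP N)"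
proof -
  have "PP (Suc N) = (\<Sum>xs\<in>B N. smult (of_nat (oc N)) (XX * monom 1 (ot xs)) + (XX - XX^2) * pderiv (monom (1::rat) (ot xs)))"
    unfolding PP_rec[OF assms(1)]
  proof (intro sum.cong refl)
    fix xs assume xs: "xs \<in> B N"
    show "(if odd (Suc N) then monom (of_nat (ot xs)) (ot xs) + monom (of_nat (oc N - ot xs)) (Suc (ot xs))
          else monom (of_nat (ot xs)) (ot xs - 1) + monom (of_nat (oc N - ot xs)) (ot xs)) =
        smult (of_nat (oc N)) (XX * monom 1 (ot xs)) + (XX - XX^2) * pderiv (monom (1::rat) (ot xs))"
      by (subst if_P[OF assms(2)]) (rule id_odd[OF ot_le[OF xs]])
  qed
  also have "\<dots> = smult (of_nat (oc N)) (XX * PP N) + (XX - XX^2) * pderiv (PP N)"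
    unfolding PP_def by (simp only: sum.distrib pderiv_sum sum_distrib_left smult_sum_poly)
  finally show ?thesis .
qed

lemma PP_even:
  assumes "N \<ge> 1" "even (Suc N)"
  shows "PP (Suc N) = smult (of_nat (oc N)) (PP N) + (1 - XX) * pderiv (PP N)"
proof -
  have "PP (Suc N) = (\<Sum>xs\<in>B N. smult (of_nat (oc N)) (monom 1 (ot xs)) + (1 - XX) * pderiv (monom (1::rat) (ot xs)))"
    unfolding PP_rec[OF assms(1)]
  proof (intro sum.cong refl)
    fix xs assume xs: "xs \<in> B N"
    have ne: "odd (Suc N) = False" using assms(2) by simp
    show "(if odd (Suc N) then monom (of_nat (ot xs)) (ot xs) + monom (of_nat (oc N - ot xs)) (Suc (ot xs))
          else monom (of_nat (ot xs)) (ot xs - 1) + monom (of_nat (oc N - ot xs)) (ot xs)) =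
        smult (of_nat (oc N)) (monom 1 (ot xs)) + (1 - XX) * pderiv (monom (1::rat) (ot xs))"
      using id_even[OF ot_le[OF xs]] by (simp only: ne if_False)
  qed
  also have "\<dots> = smult (of_nat (oc N)) (PP N) + (1 - XX) * pderiv (PP N)"
    unfolding PP_def by (simp only: sum.distrib pderiv_sum sum_distrib_left smult_sum_poly)
  finally show ?thesis .
qed



lemma oc_Suc: "oc (Suc N) = oc N + (if odd (Suc N) then 1 else 0)"
proof (cases "odd (Suc N)")
  case True
  have e1: "{x. odd x} \<inter> {1..Suc N} = insert (Suc N) ({x. odd x} \<inter> {1..N})" using True by (auto simp: le_Suc_eq)
  have e2: "card (insert (Suc N) ({x. odd x} \<inter> {1..N})) = Suc (card ({x. odd x} \<inter> {1..N}))"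
    by (rule card_insert_disjoint) auto
  show ?thesis unfolding oc_def e1 e2 using True by (simp only: not_False_eq_True if_True Suc_eq_plus1)
next
  case False
  have e1: "{x. odd x} \<inter> {1..Suc N} = {x. odd x} \<inter> {1..N}" using False by (auto simp: le_Suc_eq)
  show ?thesis unfolding oc_def e1 using False by (simp only: if_False add_0_right)
qed

lemma oc_even: "oc (2 * n) = n"
proof (induction n)
  case 0 show ?case by (simp add: oc_def)
next
  case (Suc n)
  have e: "2 * Suc n = Suc (Suc (2*n))" by simp
  have "oc (Suc (Suc (2*n))) = oc (2*n) + 1" by (simp only: oc_Suc) simp
  then show ?case unfolding e using Suc by simp
qed

lemma oc_odd: "oc (Suc (2 * n)) = Suc n"
  by (simp add: oc_Suc oc_even)



lemma L1: "L 1 = {[1]}"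
proof
  show "L 1 \<subseteq> {[1]}"
  proof
    fix xs assume xs: "xs \<in> L 1"
    then have l: "length xs = 1" by (rule L_length)
    then obtain a where a: "xs = [a]" by (cases xs) auto
    have "hd xs = 1" using xs unfolding L_def by simp
    then show "xs \<in> {[1]}" using a by simp
  qed
  show "{[1]} \<subseteq> L 1" by (simp add: L_def)
qed

lemma PP1: "PP 1 = 1"
proof -
  have "bo [1]" by (simp add: bo_def edges_def)
  then have "B 1 = {[1]}" unfolding B_def L1 by auto
  moreover have "ot [1] = 0" by (simp add: ot_def edges_def otp_def)
  ultimately show ?thesis unfolding PP_def by simp
qed

lemma PP2: "PP 2 = 1"
proof -
  have "PP (Suc 1) = smult (of_nat (oc 1)) (PP 1) + (1 - XX) * pderiv (PP 1)"
    by (rule PP_even) auto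
  moreover have "oc 1 = 1" using oc_odd[of 0] by simp
  moreover have p1: "PP (Suc 0) = 1" using PP1 by simp
  ultimately show ?thesis by (simp add: numeral_2_eq_2)
qed


definition QQ :: "nat \<Rightarrow> rat poly" where
  "QQ N = pcompose (PP N) [:1, -1:]"

lemma q_eq: "[:1, -1:] = (1 - XX :: rat poly)"
  by (simp add: one_pCons)

lemma smult_eq: "smult a p = [:a:] * p"
  by simp

lemma pc_X: "pcompose XX [:1, -1:] = (1 - XX :: rat poly)"
  by (simp add: pcompose_pCons q_eq)

lemma pc_deriv: "pcompose (pderiv p) [:1, -1:] = - pderiv (pcompose p [:1, -1::rat:])"
  by (simp add: pderiv_pcompose pderiv_pCons)

lemma ring_id1:
  fixes Q D X :: "rat poly"
  shows "[:c:] * ((1 - X) * Q) + ((1 - X) - (1 - X)^2) * (- D) = (1 - X) * ([:c:] * Q - X * D)"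
  by algebra

lemma ring_id2:
  fixes Q D X :: "rat poly"
  shows "[:c:] * Q + (1 - (1 - X)) * (- D) = [:c:] * Q - X * D"
  by algebra

lemma QQ_odd:
  assumes "n \<ge> 1"
  shows "QQ (Suc (2*n)) = (1 - XX) * (smult (of_nat n) (QQ (2*n)) - XX * pderiv (QQ (2*n)))"
proof -
  have "PP (Suc (2*n)) = smult (of_nat (oc (2*n))) (XX * PP (2*n)) + (XX - XX^2) * pderiv (PP (2*n))"
    by (rule PP_odd) (use assms in auto)
  then have "QQ (Suc (2*n)) = smult (of_nat n) ((1 - XX) * QQ (2*n)) + ((1 - XX) - (1 - XX)^2) * (- pderiv (QQ (2*n)))"
    unfolding QQ_def oc_even power2_eq_square
    by (simp only: pcompose_add pcompose_smult pcompose_mult pcompose_diff pc_X pc_deriv)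
  then show ?thesis unfolding smult_eq ring_id1 .
qed

lemma QQ_even:
  assumes "n \<ge> 1"
  shows "QQ (Suc (Suc (2*n))) = smult (of_nat (Suc n)) (QQ (Suc (2*n))) - XX * pderiv (QQ (Suc (2*n)))"
proof -
  have "PP (Suc (Suc (2*n))) = smult (of_nat (oc (Suc (2*n)))) (PP (Suc (2*n))) + (1 - XX) * pderiv (PP (Suc (2*n)))"
    by (rule PP_even) (use assms in auto)
  then have "QQ (Suc (Suc (2*n))) = smult (of_nat (Suc n)) (QQ (Suc (2*n))) + (1 - (1 - XX)) * (- pderiv (QQ (Suc (2*n))))"
    unfolding QQ_def oc_odd
    by (simp only: pcompose_add pcompose_smult pcompose_mult pcompose_diff pc_X pc_deriv pcompose_1)
  then show ?thesis unfolding smult_eq ring_id2 .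
qed

lemma QQ2: "QQ 2 = 1"
  by (simp add: QQ_def PP2 pcompose_1)

lemma coeff_XX_mult: "coeff (XX * p) j = (if j = 0 then 0 else coeff p (j - 1))"
  by (cases j) (simp_all add: coeff_pCons)

lemma coeff_op: "coeff (smult c P - XX * pderiv P) j = (c - of_nat j) * coeff P j"
  by (cases j) (simp_all add: coeff_XX_mult coeff_pderiv algebra_simps)

lemma coeff_1mX: "coeff ((1 - XX) * P) j = coeff P j - (if j = 0 then 0 else coeff P (j - 1))"
  by (cases j) (simp_all add: left_diff_distrib coeff_pCons)

lemma QQ_coeff:
  assumes "n \<ge> 1"
  shows "coeff (QQ (2 * Suc n)) j = (of_nat (Suc n) - of_nat j) *
     ((of_nat n - of_nat j) * coeff (QQ (2*n)) j -
      (if j = 0 then 0 else (of_nat n - of_nat j + 1) * coeff (QQ (2*n)) (j - 1)))"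
proof -
  have e: "2 * Suc n = Suc (Suc (2*n))" by simp
  show ?thesis unfolding e QQ_even[OF assms] QQ_odd[OF assms] coeff_op coeff_1mX
    by (cases j) (simp_all add: algebra_simps)
qed


definition DD :: "nat \<Rightarrow> rat fps" where
  "DD m = (\<Prod>k=1..m. (1 + fps_const (of_nat (k^2)) * fps_X))"

definition aa :: "nat \<Rightarrow> nat \<Rightarrow> rat" where
  "aa n m = fps_nth (fps_X ^ m * inverse (DD m)) n"

definition vv :: "nat \<Rightarrow> nat \<Rightarrow> rat" where
  "vv n m = of_nat (fact m * fact (m - 1)) * aa n m"

lemma genocchi_vv: "genocchi n = (\<Sum>m=1..n. vv n m)"
  unfolding genocchi_def genocchi_term_def vv_def aa_def DD_def
  by (simp add: mult.assoc)

lemma aa_big: "n < m \<Longrightarrow> aa n m = 0"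
  unfolding aa_def by (simp add: fps_X_power_mult_nth)

lemma vv_big: "n < m \<Longrightarrow> vv n m = 0"
  unfolding vv_def by (simp add: aa_big)

lemma aa_0: "aa n 0 = (if n = 0 then 1 else 0)"
  unfolding aa_def DD_def by simp

lemma aa_rec: "aa (Suc n) (Suc m) = aa n m - of_nat ((Suc m)^2) * aa n (Suc m)"
proof -
  define c :: rat where "c = of_nat ((Suc m)^2)"
  define F where "F = (\<lambda>m. fps_X ^ m * inverse (DD m))"
  have D: "DD (Suc m) = DD m * (1 + fps_const c * fps_X)"
    unfolding DD_def c_def by simp
  have inv: "inverse (1 + fps_const c * fps_X) * (1 + fps_const c * fps_X) = 1"
    by (rule inverse_mult_eq_1) simp
  have "F (Suc m) * (1 + fps_const c * fps_X) = fps_X * F m"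
    unfolding F_def D fps_inverse_mult
    by (metis (no_types, lifting) inv mult.assoc mult.commute mult.left_neutral power_Suc)
  then have "fps_nth (F (Suc m) * (1 + fps_const c * fps_X)) (Suc n) = fps_nth (fps_X * F m) (Suc n)" by simp
  then have "fps_nth (F (Suc m)) (Suc n) + c * fps_nth (F (Suc m)) n = fps_nth (F m) n"
    by (simp add: distrib_left mult.commute[of _ fps_X] mult.left_commute[of _ fps_X] mult.commute[of c])
  then show ?thesis unfolding aa_def F_def c_def[symmetric] by simp
qed

lemma vv_0: "n \<ge> 1 \<Longrightarrow> vv n 0 = 0"
  unfolding vv_def by (simp add: aa_0)

lemma vv_rec:
  assumes "n \<ge> 1"
  shows "vv (Suc n) m = of_nat (m * (m - 1)) * (if m = 0 then 0 else vv n (m - 1)) - of_nat (m^2) * vv n m"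
proof (cases m)
  case 0 then show ?thesis using vv_0[of "Suc n"] by simp
next
  case (Suc m')
  show ?thesis
  proof (cases m')
    case 0
    then show ?thesis using Suc assms unfolding vv_def by (simp add: aa_rec aa_0)
  next
    case (Suc k)
    then show ?thesis using \<open>m = Suc m'\<close> unfolding vv_def
      by (simp add: aa_rec algebra_simps)
  qed
qed

lemma QQ_vv:
  assumes "n \<ge> 1"
  shows "coeff (QQ (2*n)) j = (if j \<le> n then vv n (n - j) else 0)"
  using assms
proof (induction n arbitrary: j rule: nat_induct_at_least)
  case base
  have a11: "aa 1 1 = 1" using aa_rec[of 0 0] aa_big[of 0 1] aa_0[of 0] by simp
  have "vv 1 1 = 1" unfolding vv_def using a11 by simp
  moreover have "vv 1 0 = 0" using vv_0[of 1] by simp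
  ultimately show ?case using QQ2 by (cases j) (auto simp: coeff_1)
next
  case (Suc n)
  note IH = Suc.IH
  show ?case
  proof (cases "j \<le> n")
    case True
    define m where "m = Suc n - j"
    have m1: "m \<ge> 1" "m - 1 = n - j" using True unfolding m_def by auto
    have cm: "(of_nat (Suc n) - of_nat j :: rat) = of_nat m" using True unfolding m_def by (simp add: of_nat_diff)
    have cm1: "(of_nat n - of_nat j :: rat) = of_nat (m - 1)" using True m1 by (simp add: of_nat_diff)
    have qj: "coeff (QQ (2*n)) j = vv n (m - 1)" using IH True m1 by simp
    have qj1: "(if j = 0 then 0 else (of_nat n - of_nat j + 1) * coeff (QQ (2*n)) (j - 1)) = of_nat m * vv n m"
    proof (cases j)
      case 0 then show ?thesis using vv_big[of n m] m_def by simp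
    next
      case (Suc j')
      have "coeff (QQ (2*n)) j' = vv n m" using IH[of j'] Suc True unfolding m_def by simp
      moreover have "(of_nat n - of_nat j + 1 :: rat) = of_nat m" using True Suc unfolding m_def by (simp add: of_nat_diff)
      ultimately show ?thesis using Suc by simp
    qed
    have "coeff (QQ (2 * Suc n)) j = of_nat m * (of_nat (m - 1) * vv n (m - 1) - of_nat m * vv n m)"
      by (simp only: QQ_coeff[OF Suc.hyps] qj1) (simp only: cm cm1 qj)
    also have "\<dots> = vv (Suc n) m"
    proof -
      have "vv (Suc n) m = of_nat m * of_nat (m-1) * vv n (m-1) - of_nat m * of_nat m * vv n m"
        using vv_rec[OF Suc.hyps, of m] m1(1) by (simp add: power2_eq_square)
      then show ?thesis by (simp add: right_diff_distrib mult.assoc)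
    qed
    finally show ?thesis using True unfolding m_def by simp
  next
    case False
    then have q0: "coeff (QQ (2*n)) j = 0" using IH by simp
    show ?thesis
    proof (cases "j = Suc n")
      case True
      then show ?thesis unfolding QQ_coeff[OF Suc.hyps] using vv_0[of "Suc n"] by simp
    next
      case False
      then have "coeff (QQ (2*n)) (j - 1) = 0" using IH \<open>\<not> j \<le> n\<close> by simp
      then show ?thesis unfolding QQ_coeff[OF Suc.hyps] using q0 False \<open>\<not> j \<le> n\<close> by simp
    qed
  qed
qed


lemma mod_aux: "0 < (n::nat) \<Longrightarrow> (n - k mod n + k) mod n = 0"
proof -
  assume n: "0 < n"
  have "k mod n < n" using n by simp
  have "n - k mod n + k = n + (k div n) * n"
    using div_mult_mod_eq[of k n] \<open>k mod n < n\<close> by linarith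
  then show ?thesis by simp
qed

lemma rotate_back: "xs = rotate (length xs - k mod length xs) (rotate k xs)"
proof (cases "xs = []")
  case True then show ?thesis by simp
next
  case False
  have "rotate (length xs - k mod length xs) (rotate k xs) = rotate (length xs - k mod length xs + k) xs"
    by (rule rotate_rotate)
  also have "\<dots> = xs" by (rule rotate_id) (use False mod_aux in simp)
  finally show ?thesis by simp
qed

lemma equiv_cyc: "equiv (perms_list N) (cyc_rel N)"
proof (rule equivI)
  show "cyc_rel N \<subseteq> perms_list N \<times> perms_list N" unfolding cyc_rel_def by auto
  show "refl_on (perms_list N) (cyc_rel N)"
    unfolding refl_on_def cyc_rel_def by (auto intro: exI[of _ 0])
  show "sym (cyc_rel N)"
    unfolding sym_def cyc_rel_def using rotate_back by blast
  show "trans (cyc_rel N)"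
    unfolding trans_def cyc_rel_def by (auto simp: rotate_rotate)
qed

lemma is_drop_rotate:
  assumes "is_drop (rotate k xs) a b" shows "is_drop xs a b"
proof -
  define n where "n = length xs"
  obtain i where i: "i < n" "a = rotate k xs ! i" "b = rotate k xs ! ((i + 1) mod n)" "a > b"
    using assms unfolding is_drop_def n_def by auto
  have n: "n > 0" using i by simp
  define i' where "i' = (k + i) mod n"
  have "i' < n" using n unfolding i'_def by simp
  moreover have "a = xs ! i'" using i unfolding i'_def n_def by (simp add: nth_rotate)
  moreover have "b = xs ! ((i' + 1) mod n)"
  proof -
    have "b = xs ! ((k + (i + 1) mod n) mod n)" using i n unfolding n_def by (simp add: nth_rotate)
    also have "(k + (i + 1) mod n) mod n = (i' + 1) mod n"
      unfolding i'_def by (simp add: mod_add_right_eq mod_add_left_eq add.assoc mod_Suc_eq)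
    finally show ?thesis .
  qed
  ultimately show ?thesis using i(4) unfolding is_drop_def n_def by blast
qed

lemma valid_iff: "only_even_odd_drops xs \<longleftrightarrow> bo xs \<and> ot xs = 0"
proof -
  have d: "is_drop xs a b \<longleftrightarrow> (a, b) \<in> set (edges xs) \<and> b < a" for a b
    unfolding is_drop_def in_set_conv_nth length_edges
    by (auto simp: edges_nth)
  have "ot xs = 0 \<longleftrightarrow> (\<forall>e\<in>set (edges xs). \<not> otp e)"
    unfolding ot_def by (simp add: filter_empty_conv)
  then show ?thesis unfolding only_even_odd_drops_def bo_def d otp_def by auto
qed


lemma card_cycles:
  assumes N: "N \<ge> 1"
  shows "card {C \<in> cycles N. \<forall>xs \<in> C. only_even_odd_drops xs} = card {xs \<in> B N. ot xs = 0}"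
proof -
  let ?f = "\<lambda>xs. cyc_rel N `` {xs}"
  have eq: "equiv (perms_list N) (cyc_rel N)" by (rule equiv_cyc)
  have LP: "L N \<subseteq> perms_list N" unfolding L_def perms_list_def by auto
  have S: "{xs \<in> B N. ot xs = 0} = {xs \<in> L N. only_even_odd_drops xs}"
    unfolding B_def valid_iff by auto
  have "bij_betw ?f {xs \<in> L N. only_even_odd_drops xs} {C \<in> cycles N. \<forall>xs \<in> C. only_even_odd_drops xs}"
  proof (rule bij_betw_imageI)
    show "inj_on ?f {xs \<in> L N. only_even_odd_drops xs}"
    proof (rule inj_onI)
      fix xs ys assume xs: "xs \<in> {xs \<in> L N. only_even_odd_drops xs}" and ys: "ys \<in> {xs \<in> L N. only_even_odd_drops xs}"
        and e: "?f xs = ?f ys"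
      have "(xs, ys) \<in> cyc_rel N" using eq_equiv_class_iff[OF eq] e xs ys LP by auto
      then obtain k where k: "ys = rotate k xs" unfolding cyc_rel_def by auto
      have lx: "length xs = N" using xs L_length by auto
      have dx: "distinct xs" "hd xs = 1" "hd ys = 1" using xs ys unfolding L_def by auto
      have ne: "xs \<noteq> []" using lx N by auto
      have "xs ! (k mod length xs) = xs ! 0"
        using dx k ne hd_rotate_conv_nth[of xs k] hd_conv_nth[of xs] by simp
      then have "k mod length xs = 0" using dx(1) ne nth_eq_iff_index_eq[of xs "k mod length xs" 0] by simp
      then show "xs = ys" using k by simp
    qed
    show "?f ` {xs \<in> L N. only_even_odd_drops xs} = {C \<in> cycles N. \<forall>xs \<in> C. only_even_odd_drops xs}"
    proof
      show "?f ` {xs \<in> L N. only_even_odd_drops xs} \<subseteq> {C \<in> cycles N. \<forall>xs \<in> C. only_even_odd_drops xs}"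
      proof
        fix C assume "C \<in> ?f ` {xs \<in> L N. only_even_odd_drops xs}"
        then obtain xs where xs: "xs \<in> L N" "only_even_odd_drops xs" and Cx: "C = ?f xs" by auto
        have "?f xs \<in> cycles N" unfolding cycles_def using xs LP by (auto intro: quotientI)
        moreover have "only_even_odd_drops ys" if "ys \<in> ?f xs" for ys
        proof -
          have "(xs, ys) \<in> cyc_rel N" using that by simp
          then obtain k where "ys = rotate k xs" unfolding cyc_rel_def by blast
          then show ?thesis using xs(2) is_drop_rotate unfolding only_even_odd_drops_def by blast
        qed
        ultimately show "C \<in> {C \<in> cycles N. \<forall>xs \<in> C. only_even_odd_drops xs}" using Cx by blast
      qed
      show "{C \<in> cycles N. \<forall>xs \<in> C. only_even_odd_drops xs} \<subseteq> ?f ` {xs \<in> L N. only_even_odd_drops xs}"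
      proof
        fix C assume "C \<in> {C \<in> cycles N. \<forall>xs \<in> C. only_even_odd_drops xs}"
        then have C: "C \<in> cycles N" "\<forall>xs \<in> C. only_even_odd_drops xs" by auto
        obtain xs where xs: "C = ?f xs" "xs \<in> perms_list N" using C(1) unfolding cycles_def by (auto elim: quotientE)
        have "1 \<in> set xs" using xs N unfolding perms_list_def by auto
        then obtain i where i: "i < length xs" "xs ! i = 1" by (auto simp: in_set_conv_nth)
        define ys where "ys = rotate i xs"
        have ysP: "ys \<in> perms_list N" using xs unfolding ys_def perms_list_def by simp
        have hy: "hd ys = 1" unfolding ys_def using i hd_rotate_conv_nth[of xs i] by (cases xs) auto
        have rel: "(xs, ys) \<in> cyc_rel N" using xs ysP unfolding cyc_rel_def ys_def by auto
        then have fy: "?f ys = C" using xs(1) equiv_class_eq[OF eq rel] by simp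
        have "ys \<in> C" using rel xs by simp
        then have "only_even_odd_drops ys" using C by auto
        moreover have "ys \<in> L N" using ysP hy unfolding L_def perms_list_def by auto
        ultimately show "C \<in> ?f ` {xs \<in> L N. only_even_odd_drops xs}" using fy by blast
      qed
    qed
  qed
  then show ?thesis unfolding S by (simp add: bij_betw_same_card)
qed

lemma coeff0_PP: "coeff (PP N) 0 = of_nat (card {xs \<in> B N. ot xs = 0})"
proof -
  have "coeff (PP N) 0 = (\<Sum>xs\<in>B N. if ot xs = 0 then 1 else 0)"
    unfolding PP_def coeff_sum by (intro sum.cong refl) (simp add: coeff_monom)
  also have "\<dots> = of_nat (card {xs \<in> B N. ot xs = 0})"
    using finite_B[of N] by (simp add: sum.If_cases Int_def)
  finally show ?thesis .
qed

theorem corollary1p3: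
  fixes n :: nat
  assumes "n \<ge> 1"
  shows "genocchi n =
    of_nat (card {C \<in> cycles (2 * n). \<forall>xs \<in> C. only_even_odd_drops xs})"
proof -
  have deg: "degree (QQ (2*n)) \<le> n" by (rule degree_le) (simp add: QQ_vv[OF assms])
  have "genocchi n = (\<Sum>m=1..n. vv n m)" by (rule genocchi_vv)
  also have "\<dots> = (\<Sum>m=0..n. vv n m)"
    using vv_0[OF assms] by (simp add: sum.atLeast_Suc_atMost[of 0 n] Suc_le_eq assms)
  also have "\<dots> = (\<Sum>j=0..n. vv n (n - j))"
    using sum.atLeastAtMost_rev[of "vv n" 0 n] by simp
  also have "\<dots> = (\<Sum>j\<le>n. coeff (QQ (2*n)) j)"
    by (simp add: QQ_vv[OF assms] atLeast0AtMost)
  also have "\<dots> = (\<Sum>j\<le>degree (QQ (2*n)). coeff (QQ (2*n)) j * 1 ^ j)"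
  proof -
    have "(\<Sum>j\<le>n. coeff (QQ (2*n)) j) = (\<Sum>j\<le>degree (QQ (2*n)). coeff (QQ (2*n)) j)"
      by (rule sum.mono_neutral_right) (use deg in \<open>auto simp: coeff_eq_0\<close>)
    then show ?thesis by simp
  qed
  also have "\<dots> = poly (QQ (2*n)) 1" by (simp add: poly_altdef)
  also have "\<dots> = coeff (PP (2*n)) 0" unfolding QQ_def by (simp add: poly_pcompose poly_0_coeff_0)
  also have "\<dots> = of_nat (card {xs \<in> B (2*n). ot xs = 0})" by (rule coeff0_PP)
  also have "\<dots> = of_nat (card {C \<in> cycles (2 * n). \<forall>xs \<in> C. only_even_odd_drops xs})"
    using card_cycles[of "2*n"] assms by simp
  finally show ?thesis .
qed


end
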